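(* Let $X$ be a normed linear space, $F:X\rightrightarrows\mathbb{R}^p$, $(x,y)\in\mathrm{gph}F$, with $F$ Lipschitz around $x$ and $y\in\mathcal{PE}(F(x),P)$. If $S$ is a nonempty compact subset of $X\times\mathbb{R}^p$, then the set $\mathrm{cl}\Big(\bigcup_{(v,w)\in S}\big(w+D_\uparrow F((x,y);v)\big)\Big)$ is $P$-bounded.
   Context: $P\subset\mathbb{R}^p$ is a closed convex pointed cone containing $0$ with nonempty interior; $F_\uparrow(x)=F(x)+P$. $\mathcal{E}(S,P)=\{y\in S:(y-P)\cap S=\{y\}\}$; contingent cone $T_S(z)=\{v:\exists h_k\to0^+,\exists v_k\to v,z+h_kv_k\in S\}$; $\mathcal{PE}(S,P)=\{y\in\mathcal{E}(S,P):T_{S+P}(y)\cap(-P)=\{0\}\}$. $F$ is Lipschitz around $x$ if there are $l>0$ and a neighborhood $\mathcal{O}$ of $x$ with $F(x_1)\subset F(x_2)+l\|x_1-x_2\|\mathbf{B}$ for $x_1,x_2\in\mathcal{O}$. Contingent derivative $DF(x,y)$: graph $T_{\mathrm{gph}F}(x,y)$, value at $v$ written $DF((x,y);v)$. Generalized contingent epiderivative: $D_\uparrow F((x,y);v)=\mathcal{E}(DF_\uparrow((x,y);v),P)$ (empty if $DF_\uparrow((x,y);v)$ is empty or has no minimal element). Recession cone $A^+=\{z:\exists h_k\to0^+,\exists y_k\in A,h_ky_k\to z\}$; $A$ is $P$-bounded if $A^+\cap(-P)=\{0\}$. *)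

theory Defs
  imports "HOL-Analysis.Analysis"
begin

definition ordering_cone :: "'b::euclidean_space set \<Rightarrow> bool" where
  "ordering_cone P \<longleftrightarrow> closed P \<and> convex P \<and> cone P \<and> 0 \<in> P
     \<and> P \<inter> uminus ` P = {0} \<and> interior P \<noteq> {}"

definition graph :: "('a \<Rightarrow> 'b set) \<Rightarrow> ('a \<times> 'b) set" where
  "graph F = {(x, y). y \<in> F x}"

definition epi_map :: "('a \<Rightarrow> 'b::ab_group_add set) \<Rightarrow> 'b set \<Rightarrow> 'a \<Rightarrow> 'b set" where
  "epi_map F P x = {y + q | y q. y \<in> F x \<and> q \<in> P}"

definition efficient :: "'b::ab_group_add set \<Rightarrow> 'b set \<Rightarrow> 'b set" where
  "efficient S P = {y \<in> S. {y - q | q. q \<in> P} \<inter> S = {y}}"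

definition contingent_cone :: "'a::real_normed_vector set \<Rightarrow> 'a \<Rightarrow> 'a set" where
  "contingent_cone S z = {v. \<exists>h :: nat \<Rightarrow> real. \<exists>vs :: nat \<Rightarrow> 'a.
      (\<forall>k. h k > 0) \<and> h \<longlonglongrightarrow> 0 \<and> vs \<longlonglongrightarrow> v \<and> (\<forall>k. z + h k *\<^sub>R vs k \<in> S)}"

definition proper_efficient :: "'b::real_normed_vector set \<Rightarrow> 'b set \<Rightarrow> 'b set" where
  "proper_efficient S P = {y \<in> efficient S P.
      contingent_cone {s + q | s q. s \<in> S \<and> q \<in> P} y \<inter> uminus ` P = {0}}"

definition lipschitz_around :: "('a::real_normed_vector \<Rightarrow> 'b::real_normed_vector set) \<Rightarrow> 'a \<Rightarrow> bool" where
  "lipschitz_around F x \<longleftrightarrow> (\<exists>l>0. \<exists>U. open U \<and> x \<in> U \<and>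
      (\<forall>x1\<in>U. \<forall>x2\<in>U. F x1 \<subseteq> {a + b | a b. a \<in> F x2 \<and> b \<in> cball 0 (l * norm (x1 - x2))}))"

definition contingent_derivative ::
  "('a::real_normed_vector \<Rightarrow> 'b::real_normed_vector set) \<Rightarrow> 'a \<Rightarrow> 'b \<Rightarrow> 'a \<Rightarrow> 'b set" where
  "contingent_derivative F x y v = {w. (v, w) \<in> contingent_cone (graph F) (x, y)}"

definition gen_contingent_epiderivative ::
  "('a::real_normed_vector \<Rightarrow> 'b::real_normed_vector set) \<Rightarrow> 'b set \<Rightarrow> 'a \<Rightarrow> 'b \<Rightarrow> 'a \<Rightarrow> 'b set" where
  "gen_contingent_epiderivative F P x y v =
     efficient (contingent_derivative (epi_map F P) x y v) P"

definition recession_cone :: "'b::real_normed_vector set \<Rightarrow> 'b set" where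
  "recession_cone A = {z. \<exists>h :: nat \<Rightarrow> real. \<exists>ys :: nat \<Rightarrow> 'b.
      (\<forall>k. h k > 0) \<and> h \<longlonglongrightarrow> 0 \<and> (\<forall>k. ys k \<in> A) \<and> (\<lambda>k. h k *\<^sub>R ys k) \<longlonglongrightarrow> z}"

text \<open>P-bounded: no nonzero recession direction in -P (the empty set counts as P-bounded).\<close>
definition P_bounded :: "'b::real_normed_vector set \<Rightarrow> 'b set \<Rightarrow> bool" where
  "P_bounded A P \<longleftrightarrow> recession_cone A \<inter> uminus ` P \<subseteq> {0}"

end

theory Submission
  imports Defs
begin

lemma cc_iff:
  "v \<in> contingent_cone S z \<longleftrightarrow>
   (\<forall>e>0. \<exists>h u. 0 < h \<and> h < e \<and> norm (u - v) < e \<and> z + h *\<^sub>R u \<in> S)"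
proof
  assume "v \<in> contingent_cone S z"
  then obtain h vs where h: "\<forall>k. h k > 0" "h \<longlonglongrightarrow> 0" "vs \<longlonglongrightarrow> v" "\<forall>k. z + h k *\<^sub>R vs k \<in> S"
    unfolding contingent_cone_def by blast
  show "\<forall>e>0. \<exists>h u. 0 < h \<and> h < e \<and> norm (u - v) < e \<and> z + h *\<^sub>R u \<in> S"
  proof (intro allI impI)
    fix e :: real assume e: "e > 0"
    have "eventually (\<lambda>k. dist (h k) 0 < e) sequentially" using h(2) e tendstoD by blast
    moreover have "eventually (\<lambda>k. dist (vs k) v < e) sequentially" using h(3) e tendstoD by blast
    ultimately obtain k where "dist (h k) 0 < e" "dist (vs k) v < e"
      using eventually_happens'[OF sequentially_bot] eventually_conj by (metis (mono_tags, lifting))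
    then show "\<exists>h u. 0 < h \<and> h < e \<and> norm (u - v) < e \<and> z + h *\<^sub>R u \<in> S"
      using h(1,4) by (intro exI[of _ "h k"] exI[of _ "vs k"]) (auto simp: dist_norm)
  qed
next
  assume H: "\<forall>e>0. \<exists>h u. 0 < h \<and> h < e \<and> norm (u - v) < e \<and> z + h *\<^sub>R u \<in> S"
  have "\<forall>n. \<exists>p. 0 < fst p \<and> fst p < inverse (real (Suc n)) \<and> norm (snd p - v) < inverse (real (Suc n)) \<and> z + fst p *\<^sub>R snd p \<in> S"
    using H by auto
  then obtain p where p: "\<And>n. 0 < fst (p n) \<and> fst (p n) < inverse (real (Suc n)) \<and> norm (snd (p n) - v) < inverse (real (Suc n)) \<and> z + fst (p n) *\<^sub>R snd (p n) \<in> S"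
    by metis
  have a: "norm (fst (p n)) \<le> inverse (real (Suc n))" for n
    using p[of n] by (simp del: of_nat_Suc)
  have 1: "(\<lambda>n. fst (p n)) \<longlonglongrightarrow> 0"
    by (rule Lim_null_comparison[OF _ LIMSEQ_inverse_real_of_nat]) (use a in \<open>auto intro!: always_eventually\<close>)
  have "(\<lambda>n. snd (p n) - v) \<longlonglongrightarrow> 0"
    by (rule Lim_null_comparison[OF _ LIMSEQ_inverse_real_of_nat]) (use p in \<open>auto intro!: always_eventually less_imp_le simp del: of_nat_Suc\<close>)
  then have 2: "(\<lambda>n. snd (p n)) \<longlonglongrightarrow> v" by (rule LIM_zero_cancel)
  show "v \<in> contingent_cone S z" unfolding contingent_cone_def
    using 1 2 p by (intro CollectI exI[of _ "\<lambda>n. fst (p n)"] exI[of _ "\<lambda>n. snd (p n)"]) auto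
qed

lemma core:
  fixes F :: "'a::real_normed_vector \<Rightarrow> 'b::real_normed_vector set"
  assumes lip: "lipschitz_around F x" and M: "M \<ge> 0"
    and C: "\<forall>e>0. \<exists>s d v. 0 < s \<and> s < e \<and> norm v \<le> M \<and>
       d \<in> contingent_derivative (epi_map F P) x y v \<and> norm (s *\<^sub>R d - z) < e"
  shows "z \<in> contingent_cone {s + q | s q. s \<in> F x \<and> q \<in> P} y"
proof -
  obtain l U where l: "l > 0" "open U" "x \<in> U"
    and LU: "\<And>x1 x2. x1 \<in> U \<Longrightarrow> x2 \<in> U \<Longrightarrow> F x1 \<subseteq> {a + b | a b. a \<in> F x2 \<and> b \<in> cball 0 (l * norm (x1 - x2))}"
    using lip unfolding lipschitz_around_def by blast
  obtain r where r: "r > 0" "ball x r \<subseteq> U" using l open_contains_ball by blast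
  show ?thesis unfolding cc_iff
  proof (intro allI impI)
    fix e :: real assume e: "e > 0"
    define e1 where "e1 = min (e/3) (e / (3 * (l * (M + 1))))"
    have e1: "e1 > 0" using e l M by (simp add: e1_def)
    obtain s d v where sdv: "0 < s" "s < e1" "norm v \<le> M"
      "d \<in> contingent_derivative (epi_map F P) x y v" "norm (s *\<^sub>R d - z) < e1"
      using C e1 by blast
    have slM: "s * (l * (M + 1)) \<le> e / 3"
    proof -
      have "s \<le> e / (3 * (l * (M + 1)))" using sdv(2) by (simp add: e1_def)
      moreover have K: "l * (M + 1) > 0" using l M by simp
      ultimately have "s * (l * (M + 1)) \<le> e / (3 * (l * (M + 1))) * (l * (M + 1))"
        by (intro mult_right_mono) auto
      also have "\<dots> = e / 3" using K l M by (simp add: divide_simps)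
      finally show ?thesis .
    qed
    have "(v, d) \<in> contingent_cone (graph (epi_map F P)) (x, y)"
      using sdv(4) by (simp add: contingent_derivative_def)
    define e2 where "e2 = min (min 1 (e / (3 * s))) (min (e * s) (r / (M + 2)))"
    have e2: "e2 > 0" using e sdv r M by (simp add: e2_def)
    obtain \<tau> ac where tac: "0 < \<tau>" "\<tau> < e2" "norm (ac - (v, d)) < e2"
      "(x, y) + \<tau> *\<^sub>R ac \<in> graph (epi_map F P)"
      using \<open>(v, d) \<in> _\<close>[unfolded cc_iff] e2 by blast
    obtain a c where ac: "ac = (a, c)" by (cases ac)
    have na: "norm (a - v) < e2" using tac(3) norm_fst_le[of "a - v" "c - d"] ac by simp
    have nc: "norm (c - d) < e2" using tac(3) norm_snd_le[of "c - d" "a - v"] ac by simp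
    have "norm a \<le> norm v + norm (a - v)" by (metis add.commute diff_add_cancel norm_triangle_ineq)
    then have aM: "norm a < M + 1" using na sdv(3) by (simp add: e2_def)
    have "y + \<tau> *\<^sub>R c \<in> epi_map F P (x + \<tau> *\<^sub>R a)"
      using tac(4) ac by (simp add: graph_def)
    then obtain f' q where fq: "y + \<tau> *\<^sub>R c = f' + q" "f' \<in> F (x + \<tau> *\<^sub>R a)" "q \<in> P"
      unfolding epi_map_def by blast
    have "norm (\<tau> *\<^sub>R a) < r"
    proof -
      have "norm (\<tau> *\<^sub>R a) = \<tau> * norm a" using tac(1) by simp
      also have "\<dots> \<le> \<tau> * (M + 1)" using aM tac(1) by simp
      also have "\<dots> < (r / (M + 2)) * (M + 2)"
      proof -
        have "\<tau> < r / (M + 2)" using tac(2) by (simp add: e2_def)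
        then have "\<tau> * (M + 1) < (r / (M + 2)) * (M + 1)" using M by (intro mult_strict_right_mono) auto
        also have "\<dots> \<le> (r / (M + 2)) * (M + 2)" using r M by (intro mult_left_mono) auto
        finally show ?thesis .
      qed
      also have "\<dots> = r" using M by simp
      finally show ?thesis .
    qed
    then have "x + \<tau> *\<^sub>R a \<in> U" using r by (auto simp: dist_norm intro!: subsetD[OF r(2)])
    from LU[OF this l(3)] fq(2) obtain f b where fb: "f' = f + b" "f \<in> F x"
      "b \<in> cball 0 (l * norm (x + \<tau> *\<^sub>R a - x))" by blast
    have nb: "norm b \<le> l * (\<tau> * norm a)" using fb(3) tac(1) by simp
    define u where "u = s *\<^sub>R c - (s / \<tau>) *\<^sub>R b"
    define t where "t = \<tau> / s"
    have "y + t *\<^sub>R u = y + \<tau> *\<^sub>R c - b"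
      using sdv(1) tac(1) by (simp add: u_def t_def scaleR_diff_right)
    also have "\<dots> = f + q" using fq(1) fb(1) by simp
    finally have mem: "y + t *\<^sub>R u \<in> {s + q | s q. s \<in> F x \<and> q \<in> P}" using fb(2) fq(3) by blast
    have t0: "0 < t" using sdv(1) tac(1) by (simp add: t_def)
    have te: "t < e"
    proof -
      have "\<tau> < e * s" using tac(2) by (simp add: e2_def)
      then show ?thesis using sdv(1) by (simp add: t_def field_simps)
    qed
    have "u - z = s *\<^sub>R (c - d) + (s *\<^sub>R d - z) - (s / \<tau>) *\<^sub>R b"
      by (simp add: u_def algebra_simps)
    then have "norm (u - z) \<le> norm (s *\<^sub>R (c - d)) + norm (s *\<^sub>R d - z) + norm ((s / \<tau>) *\<^sub>R b)"
    proof -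
      have "norm (s *\<^sub>R (c - d) + (s *\<^sub>R d - z) - (s / \<tau>) *\<^sub>R b) \<le> norm (s *\<^sub>R (c - d) + (s *\<^sub>R d - z)) + norm ((s / \<tau>) *\<^sub>R b)"
        by (rule norm_triangle_ineq4)
      moreover have "norm (s *\<^sub>R (c - d) + (s *\<^sub>R d - z)) \<le> norm (s *\<^sub>R (c - d)) + norm (s *\<^sub>R d - z)"
        by (rule norm_triangle_ineq)
      ultimately show ?thesis unfolding \<open>u - z = _\<close> by linarith
    qed
    also have "norm (s *\<^sub>R (c - d)) < e / 3"
    proof -
      have "norm (s *\<^sub>R (c - d)) = s * norm (c - d)" using sdv(1) by simp
      also have "\<dots> < s * (e / (3 * s))" using nc sdv(1) by (intro mult_strict_left_mono) (auto simp: e2_def)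
      also have "\<dots> = e / 3" using sdv(1) by simp
      finally show ?thesis .
    qed
    also have "norm (s *\<^sub>R d - z) < e / 3" using sdv(5) by (simp add: e1_def)
    also have "norm ((s / \<tau>) *\<^sub>R b) \<le> e / 3"
    proof -
      have "norm ((s / \<tau>) *\<^sub>R b) = (s / \<tau>) * norm b" using sdv(1) tac(1) by simp
      also have "\<dots> \<le> (s / \<tau>) * (l * (\<tau> * norm a))" using nb sdv(1) tac(1) by (intro mult_left_mono) auto
      also have "\<dots> = s * l * norm a" using tac(1) by simp
      also have "\<dots> \<le> s * (l * (M + 1))" using aM sdv(1) l by (simp add: mult_left_mono)
      finally show ?thesis using slM by linarith
    qed
    finally have "norm (u - z) < e" by simp
    then show "\<exists>h u. 0 < h \<and> h < e \<and> norm (u - z) < e \<and> y + h *\<^sub>R u \<in> {s + q | s q. s \<in> F x \<and> q \<in> P}"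
      using t0 te mem by blast
  qed
qed

theorem proposition6p7:
  fixes F :: "'a::real_normed_vector \<Rightarrow> 'b::euclidean_space set"
    and P :: "'b set" and x :: 'a and y :: 'b and S :: "('a \<times> 'b) set"
  assumes "ordering_cone P"
    and "y \<in> F x"
    and "lipschitz_around F x"
    and "y \<in> proper_efficient (F x) P"
    and "S \<noteq> {}" and "compact S"
  shows "P_bounded (closure (\<Union>(v, w)\<in>S. (\<lambda>z. w + z) ` gen_contingent_epiderivative F P x y v)) P"
proof -
  define A where "A = (\<Union>(v, w)\<in>S. (\<lambda>z. w + z) ` gen_contingent_epiderivative F P x y v)"
  obtain M0 where M0: "M0 > 0" "\<And>p. p \<in> S \<Longrightarrow> norm p \<le> M0"
    using compact_imp_bounded[OF assms(6)] bounded_pos by blast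
  define M where "M = M0"
  have M: "M \<ge> 0" using M0 by (simp add: M_def)
  have SM: "norm v \<le> M \<and> norm w \<le> M" if "(v, w) \<in> S" for v w
    using M0(2)[OF that] norm_fst_le[of v w] norm_snd_le[of w v] by (simp add: M_def)
  have T0: "contingent_cone {s + q | s q. s \<in> F x \<and> q \<in> P} y \<inter> uminus ` P = {0}"
    using assms(4) by (simp add: proper_efficient_def)
  show ?thesis unfolding P_bounded_def A_def[symmetric]
  proof
    fix z assume z: "z \<in> recession_cone (closure A) \<inter> uminus ` P"
    then obtain h ys where h: "\<forall>k. h k > 0" "h \<longlonglongrightarrow> 0" "\<forall>k. ys k \<in> closure A"
      "(\<lambda>k. h k *\<^sub>R ys k) \<longlonglongrightarrow> z"
      unfolding recession_cone_def by blast
    have C: "\<forall>e>0. \<exists>s d v. 0 < s \<and> s < e \<and> norm v \<le> M \<and>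
       d \<in> contingent_derivative (epi_map F P) x y v \<and> norm (s *\<^sub>R d - z) < e"
    proof (intro allI impI)
      fix e :: real assume e: "e > 0"
      have e3: "e / (3 * (M + 1)) > 0" using e M by simp
      have "eventually (\<lambda>k. dist (h k) 0 < e / (3 * (M + 1))) sequentially" using h(2) e3 tendstoD by blast
      moreover have "eventually (\<lambda>k. dist (h k *\<^sub>R ys k) z < e / 3) sequentially" using h(4) e by (intro tendstoD) auto
      ultimately obtain k where k1: "dist (h k) 0 < e / (3 * (M + 1))" and k2: "dist (h k *\<^sub>R ys k) z < e / 3"
        using eventually_happens'[OF sequentially_bot] eventually_conj by (metis (mono_tags, lifting))
      obtain a where a: "a \<in> A" "dist a (ys k) < 1" using h(3) closure_approachable[of "ys k" A] by (meson zero_less_one)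
      then obtain v w d where vwd: "(v, w) \<in> S" "d \<in> gen_contingent_epiderivative F P x y v" "a = w + d"
        unfolding A_def by blast
      have dC: "d \<in> contingent_derivative (epi_map F P) x y v"
        using vwd(2) by (simp add: gen_contingent_epiderivative_def efficient_def)
      define s where "s = h k"
      have s0: "s > 0" using h(1) by (simp add: s_def)
      have sM: "s * (M + 1) < e / 3"
      proof -
        have "s < e / (3 * (M + 1))" using k1 s0 by (simp add: s_def dist_norm)
        then have "s * (M + 1) < e / (3 * (M + 1)) * (M + 1)" using M by (intro mult_strict_right_mono) auto
        also have "\<dots> = e / 3" using M by (simp add: divide_simps)
        finally show ?thesis .
      qed
      have "s *\<^sub>R d - z = (s *\<^sub>R ys k - z) + s *\<^sub>R (a - ys k) - s *\<^sub>R w"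
        using vwd(3) by (simp add: algebra_simps)
      then have "norm (s *\<^sub>R d - z) \<le> norm (s *\<^sub>R ys k - z) + norm (s *\<^sub>R (a - ys k)) + norm (s *\<^sub>R w)"
      proof -
        have "norm ((s *\<^sub>R ys k - z) + s *\<^sub>R (a - ys k) - s *\<^sub>R w) \<le> norm ((s *\<^sub>R ys k - z) + s *\<^sub>R (a - ys k)) + norm (s *\<^sub>R w)"
          by (rule norm_triangle_ineq4)
        moreover have "norm ((s *\<^sub>R ys k - z) + s *\<^sub>R (a - ys k)) \<le> norm (s *\<^sub>R ys k - z) + norm (s *\<^sub>R (a - ys k))"
          by (rule norm_triangle_ineq)
        ultimately show ?thesis unfolding \<open>s *\<^sub>R d - z = _\<close> by linarith
      qed
      also have "\<dots> = norm (s *\<^sub>R ys k - z) + s * norm (a - ys k) + s * norm w" using s0 by simp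
      also have "\<dots> \<le> norm (s *\<^sub>R ys k - z) + s * 1 + s * M"
        using a(2) SM[OF vwd(1)] s0 by (intro add_mono mult_left_mono) (auto simp: dist_norm)
      also have "\<dots> < e"
      proof -
        have "s * 1 + s * M = s * (M + 1)" by (simp add: algebra_simps)
        moreover have "norm (s *\<^sub>R ys k - z) < e / 3" using k2 by (simp add: s_def dist_norm)
        ultimately show ?thesis using sM e by linarith
      qed
      finally have "norm (s *\<^sub>R d - z) < e" .
      moreover have "s < e"
      proof -
        have "s * 1 \<le> s * (M + 1)" using s0 M by (intro mult_left_mono) auto
        then show ?thesis using sM e by linarith
      qed
      ultimately show "\<exists>s d v. 0 < s \<and> s < e \<and> norm v \<le> M \<and>
         d \<in> contingent_derivative (epi_map F P) x y v \<and> norm (s *\<^sub>R d - z) < e"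
        using s0 dC SM[OF vwd(1)] by blast
    qed
    have "z \<in> contingent_cone {s + q | s q. s \<in> F x \<and> q \<in> P} y"
      by (rule core[OF assms(3) M C])
    then show "z \<in> {0}" using z T0 by blast
  qed
qed

end
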